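(* Fix integers $K,M,N\ge 1$ and constants $P_c>0$, $P_{\max}>0$. Let $(\tilde{\mathbf{H}}(n))_{n\ge1}$ be an arbitrary sequence of block-diagonal matrices $\tilde{\mathbf{H}}(n)=\operatorname{diag}(\tilde{\mathbf{H}}_1(n),\dots,\tilde{\mathbf{H}}_K(n))$ with $\tilde{\mathbf{H}}_k(n)\in\mathbb{C}^{N\times M}$, and suppose the induced gradients satisfy $\|\mathbf{V}(n)\|\le V_0$ for all $n$ and some constant $V_0>0$ (notation as in the context). Let $(\gamma_n)_{n\ge1}$ be a nonincreasing sequence of positive step-sizes with $\gamma_n\to0$ and $n\gamma_n\to\infty$, and let $\mathbf{X}(n)$ be generated by the online gradient ascent recursion $\mathbf{X}(n+1)=\boldsymbol{\Pi}(\mathbf{X}(n)+\gamma_n\mathbf{V}(n))$ from an initial point $\mathbf{X}(1)\in\mathcal{X}$, with transmit policy $\mathbf{Q}(n)=\mathbf{Q}(\mathbf{X}(n))$. Then the policy $\mathbf{Q}(n)$ leads to no regret, i.e. $\limsup_{T\to\infty}T^{-1}\mathrm{Reg}(T)\le0$; specifically, for all $T\ge1$, $$\mathrm{Reg}(T)\le \frac{1}{\gamma_T}+\frac12 V_0^2\sum_{n=1}^T\gamma_n,$$ and, for the step-size sequence $\gamma_n=\gamma n^{-1/2}$ with $\gamma>0$, $$\mathrm{Reg}(T)\le\frac{1+\gamma^2V_0^2}{\gamma}\sqrt{T}.$$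
   Context: All matrices are complex; $\mathbf{A}^\dagger$ is the conjugate transpose and $\|\mathbf{A}\|=\operatorname{tr}(\mathbf{A}^\dagger\mathbf{A})^{1/2}$ the Frobenius norm. The effective channel matrices $\tilde{\mathbf{H}}(n)$ are assumed uniformly bounded in $n$. Feasible transmit set: $\mathcal{Q}=\{\mathbf{Q}=\operatorname{diag}(\mathbf{Q}_1,\dots,\mathbf{Q}_K):\mathbf{Q}_k\in\mathbb{C}^{M\times M}\text{ Hermitian},\ \mathbf{Q}_k\succeq0,\ \sum_k\operatorname{tr}\mathbf{Q}_k\le P_{\max}\}$. Energy efficiency at stage $n$: $\mathrm{EE}(\mathbf{Q};n)=\dfrac{\log\det(\mathbf{I}+\tilde{\mathbf{H}}(n)\mathbf{Q}\tilde{\mathbf{H}}(n)^\dagger)}{P_c+\operatorname{tr}\mathbf{Q}}$, with rate $R_n(\mathbf{Q})=\log\det(\mathbf{I}+\tilde{\mathbf{H}}(n)\mathbf{Q}\tilde{\mathbf{H}}(n)^\dagger)$. Normalized set: $\mathcal{X}=\{\mathbf{X}=\operatorname{diag}(\mathbf{X}_1,\dots,\mathbf{X}_K):\mathbf{X}_k\in\mathbb{C}^{M\times M}\text{ Hermitian},\ \mathbf{X}_k\succeq0,\ \sum_k\operatorname{tr}\mathbf{X}_k\le1\}$, with the bijection $\mathbf{Q}(\mathbf{X})=\dfrac{P_cP_{\max}}{P_c+P_{\max}(1-\operatorname{tr}\mathbf{X})}\mathbf{X}$ onto $\mathcal{Q}$. Utility: $u(\mathbf{X};n)=\mathrm{EE}(\mathbf{Q}(\mathbf{X});n)=\dfrac{P_c+P_{\max}(1-\operatorname{tr}\mathbf{X})}{P_c(P_c+P_{\max})}\log\det\Big(\mathbf{I}+\dfrac{P_cP_{\max}\tilde{\mathbf{H}}(n)\mathbf{X}\tilde{\mathbf{H}}(n)^\dagger}{P_c+P_{\max}(1-\operatorname{tr}\mathbf{X})}\Big)$.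 Gradient: $\mathbf{V}(n)=\nabla_{\mathbf{X}}u(\mathbf{X}(n);n)=\dfrac{P_{\max}}{P_c+P_{\max}}\Big[\mathbf{A}_n+\dfrac{\operatorname{tr}(\mathbf{A}_n\mathbf{Q}(n))-R_n(\mathbf{Q}(n))}{P_c}\mathbf{I}\Big]$ where $\mathbf{A}_n=\tilde{\mathbf{H}}(n)^\dagger[\mathbf{I}+\tilde{\mathbf{H}}(n)\mathbf{Q}(n)\tilde{\mathbf{H}}(n)^\dagger]^{-1}\tilde{\mathbf{H}}(n)$ and $\mathbf{Q}(n)=\mathbf{Q}(\mathbf{X}(n))$. Projection: $\boldsymbol{\Pi}(\mathbf{Y})=\arg\min_{\mathbf{X}\in\mathcal{X}}\|\mathbf{X}-\mathbf{Y}\|^2$. Regret: $\mathrm{Reg}(T)=\max_{\mathbf{Q}\in\mathcal{Q}}\sum_{n=1}^T[\mathrm{EE}(\mathbf{Q};n)-\mathrm{EE}(\mathbf{Q}(n);n)]$; a policy leads to no regret if $\limsup_{T\to\infty}T^{-1}\mathrm{Reg}(T)\le0$. *)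

theory Defs
  imports "HOL-Analysis.Analysis"
begin

(* Index conventions: a KM x KM block matrix with K blocks of size M x M is
   a matrix complex^('k \<times> 't)^('k \<times> 't), the row/column index (k,i) meaning
   row i of block k.  The effective channel H(n) (KN x KM) has type
   complex^('k \<times> 't)^('k \<times> 'r). K = CARD('k), M = CARD('t), N = CARD('r). *)

definition ctrans :: "complex^'n^'m \<Rightarrow> complex^'m^'n" where
  "ctrans A = (\<chi> i j. cnj (A $ j $ i))"

definition frob :: "complex^'n^'m \<Rightarrow> real" where
  "frob A = sqrt (Re (trace (ctrans A ** A)))"

definition hermitian :: "complex^'n^'n \<Rightarrow> bool" where
  "hermitian A \<longleftrightarrow> ctrans A = A"

definition psd :: "complex^'n^'n \<Rightarrow> bool" where
  "psd A \<longleftrightarrow> hermitian A \<and>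
     (\<forall>v::complex^'n. 0 \<le> Re (\<Sum>i\<in>UNIV. cnj (v $ i) * (A *v v) $ i))"

definition blk :: "complex^('k::finite \<times> 'a::finite)^('k \<times> 'b::finite) \<Rightarrow> 'k \<Rightarrow> complex^'a^'b" where
  "blk A k = (\<chi> i j. A $ (k, i) $ (k, j))"

definition block_diag :: "complex^('k::finite \<times> 'a::finite)^('k \<times> 'b::finite) \<Rightarrow> bool" where
  "block_diag A \<longleftrightarrow> (\<forall>k i l j. k \<noteq> l \<longrightarrow> A $ (k, i) $ (l, j) = 0)"

definition Qset :: "real \<Rightarrow> (complex^('k::finite \<times> 't::finite)^('k \<times> 't)) set" where
  "Qset P = {Q. block_diag Q \<and> (\<forall>k. psd (blk Q k))
               \<and> (\<Sum>k\<in>UNIV. Re (trace (blk Q k))) \<le> P}"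

definition Xset :: "(complex^('k::finite \<times> 't::finite)^('k \<times> 't)) set" where
  "Xset = {X. block_diag X \<and> (\<forall>k. psd (blk X k))
               \<and> (\<Sum>k\<in>UNIV. Re (trace (blk X k))) \<le> 1}"

definition rate :: "complex^'c^'r \<Rightarrow> complex^'c^'c \<Rightarrow> real" where
  "rate H Q = ln (Re (det (mat 1 + H ** Q ** ctrans H)))"

definition EE :: "real \<Rightarrow> complex^'c^'r \<Rightarrow> complex^'c^'c \<Rightarrow> real" where
  "EE Pc H Q = rate H Q / (Pc + Re (trace Q))"

definition Qmap :: "real \<Rightarrow> real \<Rightarrow> complex^'c^'c \<Rightarrow> complex^'c^'c" where
  "Qmap Pc Pmax X = (Pc * Pmax / (Pc + Pmax * (1 - Re (trace X)))) *\<^sub>R X"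

definition Amat :: "complex^'c^'r \<Rightarrow> complex^'c^'c \<Rightarrow> complex^'c^'c" where
  "Amat H Q = ctrans H ** matrix_inv (mat 1 + H ** Q ** ctrans H) ** H"

definition grad :: "real \<Rightarrow> real \<Rightarrow> complex^'c^'r \<Rightarrow> complex^'c^'c \<Rightarrow> complex^'c^'c" where
  "grad Pc Pmax H X =
     (let Q = Qmap Pc Pmax X; A = Amat H Q in
      (Pmax / (Pc + Pmax)) *\<^sub>R (A + ((Re (trace (A ** Q)) - rate H Q) / Pc) *\<^sub>R mat 1))"

definition proj :: "(complex^('k::finite \<times> 't::finite)^('k \<times> 't)) \<Rightarrow> complex^('k \<times> 't)^('k \<times> 't)" where
  "proj Y = (ARG_MIN (\<lambda>X. (frob (X - Y))\<^sup>2) X. X \<in> Xset)"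

definition regret :: "real \<Rightarrow> real \<Rightarrow> (nat \<Rightarrow> complex^('k::finite \<times> 't::finite)^('k \<times> 'r::finite))
     \<Rightarrow> (nat \<Rightarrow> complex^('k \<times> 't)^('k \<times> 't)) \<Rightarrow> nat \<Rightarrow> real" where
  "regret Pc Pmax H Qn T =
     (SUP Q \<in> Qset Pmax. (\<Sum>n = 1..T. EE Pc (H n) Q - EE Pc (H n) (Qn n)))"

end

theory Submission
  imports Defs
begin


lemma ctrans_nth[simp]: "ctrans A $ i $ j = cnj (A $ j $ i)"
  by (simp add: ctrans_def)

lemma ctrans_ctrans[simp]: "ctrans (ctrans A) = A"
  by (simp add: vec_eq_iff)

lemma ctrans_mult: "ctrans (A ** B) = ctrans B ** ctrans (A::complex^'n^'m)"
  by (simp add: vec_eq_iff matrix_matrix_mult_def mult.commute)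

lemma ctrans_add[simp]: "ctrans (A + B) = ctrans A + ctrans B"
  by (simp add: vec_eq_iff)

lemma ctrans_diff[simp]: "ctrans (A - B) = ctrans A - ctrans B"
  by (simp add: vec_eq_iff)

lemma ctrans_scaleR[simp]: "ctrans (c *\<^sub>R A) = c *\<^sub>R ctrans A"
  by (simp add: vec_eq_iff)

lemma ctrans_mat[simp]: "ctrans (mat (of_real c) :: complex^'n^'n) = mat (of_real c)"
  by (simp add: vec_eq_iff mat_def)

lemma ctrans_mat1[simp]: "ctrans (mat 1 :: complex^'n^'n) = mat 1"
  by (simp add: vec_eq_iff mat_def)

lemma trace_ctrans: "trace (ctrans A) = cnj (trace (A::complex^'n^'n))"
  by (simp add: trace_def)

lemma inner_trace: "inner (A::complex^'n^'m) B = Re (trace (ctrans A ** B))"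
  unfolding inner_vec_def trace_def matrix_matrix_mult_def
  apply (simp add: inner_complex_def Re_sum)
  apply (subst sum.swap) apply simp
  done

lemma norm_frob: "norm (A::complex^'n^'m) = frob A"
  by (simp add: frob_def norm_eq_sqrt_inner inner_trace)

lemma det_ctrans: "det (ctrans A) = cnj (det (A::complex^'n^'n))"
proof -
  have "ctrans A = transpose (\<chi> i j. cnj (A$i$j))" by (simp add: vec_eq_iff transpose_def)
  then have "det (ctrans A) = det (\<chi> i j. cnj (A$i$j))" by simp
  also have "\<dots> = cnj (det A)" by (simp add: det_def)
  finally show ?thesis .
qed

lemma trace_scaleR: "trace (c *\<^sub>R A) = c *\<^sub>R trace (A::complex^'n^'n)"
  by (simp add: trace_def scaleR_sum_right)

lemma Re_trace_scaleR[simp]: "Re (trace (c *\<^sub>R A)) = c * Re (trace (A::complex^'n^'n))"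
  by (simp add: trace_scaleR)

definition dotc :: "complex^'n \<Rightarrow> complex^'n \<Rightarrow> complex" where
  "dotc u w = (\<Sum>i\<in>UNIV. cnj (u$i) * w$i)"

definition qf :: "complex^'n^'n \<Rightarrow> complex^'n \<Rightarrow> complex" where
  "qf A v = dotc v (A *v v)"

definition pd :: "complex^'n^'n \<Rightarrow> bool" where
  "pd A \<longleftrightarrow> hermitian A \<and> (\<forall>v. v \<noteq> 0 \<longrightarrow> 0 < Re (qf A v))"

lemma psd_qf: "psd A \<longleftrightarrow> hermitian A \<and> (\<forall>v. 0 \<le> Re (qf A v))"
  by (simp add: psd_def qf_def dotc_def)

lemma dotc_mult: "dotc u ((A::complex^'n^'m) *v w) = dotc (ctrans A *v u) w"
  unfolding dotc_def matrix_vector_mult_def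
  apply (simp add: sum_distrib_left sum_distrib_right)
  apply (rule sum.swap[THEN trans])
  apply (simp add: mult_ac)
  done

lemma qf_conj: "qf (ctrans P ** G ** P) w = qf G (P *v w)"
  unfolding qf_def
  by (simp add: dotc_mult matrix_vector_mul_assoc[symmetric])

lemma hermitian_ctrans_mult: "hermitian G \<Longrightarrow> hermitian (ctrans P ** G ** P)"
  by (simp add: hermitian_def ctrans_mult matrix_mul_assoc)



lemma dotc_axis[simp]: "dotc (axis i c) x = cnj c * x$i"
proof -
  have "dotc (axis i c) x = (\<Sum>ia\<in>UNIV. if ia = i then cnj c * x $ i else 0)"
    unfolding dotc_def by (rule sum.cong) (auto simp: axis_def)
  then show ?thesis by simp
qed

lemma qf_zero[simp]: "qf A 0 = 0"
  by (simp add: qf_def dotc_def)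

lemma mult_axis[simp]: "((A::complex^'n^'m) *v axis j c)$i = A$i$j * c"
  by (simp add: matrix_vector_mult_def axis_def if_distrib cong: if_cong)

lemma qf_axis: "qf A (axis i 1) = A$i$i"
  by (simp add: qf_def)

lemma hermitian_entry: "hermitian G \<Longrightarrow> cnj (G$i$j) = G$j$i"
  unfolding hermitian_def by (metis ctrans_nth)

lemma hermitian_diag: "hermitian G \<Longrightarrow> G$i$i = of_real (Re (G$i$i))"
  using hermitian_entry[of G i i] by (metis Reals_cnj_iff complex_is_Real_iff of_real_Re)

lemma pd_psd: "pd G \<Longrightarrow> psd G"
  unfolding pd_def psd_qf
  by (metis less_eq_real_def qf_zero zero_complex.sel(1))

lemma pd_diag_pos: "pd G \<Longrightarrow> 0 < Re (G$i$i)"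
  unfolding pd_def using qf_axis[of G i] by (metis axis_eq_0_iff one_neq_zero)

lemma psd_diag_nonneg: "psd G \<Longrightarrow> 0 \<le> Re (G$i$i)"
  unfolding psd_qf using qf_axis[of G i] by metis

lemma qf_add: "qf (A + B) w = qf A w + qf B w"
  by (simp add: qf_def dotc_def matrix_vector_mult_def distrib_left distrib_right sum.distrib vector_add_component)

lemma det_col_id:
  fixes F :: "'a::comm_ring_1^'n^'n"
  assumes "\<And>a b. b \<noteq> i \<Longrightarrow> F$a$b = (if a = b then 1 else 0)"
  shows "det F = F$i$i"
proof -
  let ?U = "UNIV:: 'n set"
  let ?PU = "{p. p permutes ?U}"
  let ?pp = "\<lambda>p. of_int (sign p) * prod (\<lambda>a. F$a$p a) (UNIV :: 'n set)"
  have fU: "finite ?U" by simp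
  from finite_permutations[OF fU] have fPU: "finite ?PU" .
  have id0: "{id} \<subseteq> ?PU"
    by (auto simp: permutes_id)
  have p0: "\<forall>p \<in> ?PU - {id}. ?pp p = 0"
  proof
    fix p
    assume p: "p \<in> ?PU - {id}"
    then obtain a where a: "p a \<noteq> a"
      by fastforce
    have pp: "p permutes ?U" using p by auto
    have "\<exists>c \<in> ?U. F$c$p c = 0"
    proof (cases "p a = i")
      case False
      then show ?thesis using assms[of "p a" a] a by (metis UNIV_I)
    next
      case True
      then have "a \<noteq> i" using a by auto
      then have "p i \<noteq> i" using True pp by (metis permutes_inj inj_eq)
      then show ?thesis using assms[of "p i" i] by (metis UNIV_I)
    qed
    with prod_zero [OF fU] show "?pp p = 0"
      by force
  qed
  from sum.mono_neutral_cong_left[OF fPU id0 p0]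
  have "det F = prod (\<lambda>a. F$a$a) ?U"
    unfolding det_def by (simp add: sign_id)
  also have "\<dots> = F$i$i * prod (\<lambda>a. F$a$a) (?U - {i})"
    by (simp add: prod.remove)
  also have "prod (\<lambda>a. F$a$a) (?U - {i}) = 1"
    by (rule prod.neutral) (simp add: assms)
  finally show ?thesis by simp
qed



lemma sum_if_eq[simp]: "(\<Sum>l\<in>UNIV. (if l = (a::'n::finite) then f l else 0)) = f a"
  by (subst sum.delta) auto

lemma sum_if_eq'[simp]: "(\<Sum>l\<in>UNIV. (if (a::'n::finite) = l then f l else 0)) = f a"
  by (subst sum.delta') auto

lemma if_mult0_r: "(x::'a::comm_ring_1) * (if P then a else 0) = (if P then x * a else 0)"
  by simp
lemma if_mult0_l: "(if P then a else 0) * (x::'a::comm_ring_1) = (if P then a * x else 0)"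
  by simp
lemma if_div0: "(if P then a else 0) / (x::'a::field) = (if P then a / x else 0)"
  by simp
lemmas if0_simps = if_mult0_r if_mult0_l if_div0

lemma sum_if_mult1[simp]: "(\<Sum>l\<in>UNIV. (if l = (a::'n::finite) then c else 0) * f l) = c * (f a :: 'a::comm_ring_1)"
proof -
  have "(\<Sum>l\<in>UNIV. (if l = a then c else 0) * f l) = (\<Sum>l\<in>UNIV. if l = a then c * f l else 0)"
    by (rule sum.cong) auto
  also have "\<dots> = c * f a" by (rule sum_if_eq)
  finally show ?thesis .
qed

lemma sum_if_mult2[simp]: "(\<Sum>l\<in>UNIV. f l * (if l = (a::'n::finite) then c else 0)) = (f a :: 'a::comm_ring_1) * c"
proof -
  have "(\<Sum>l\<in>UNIV. f l * (if l = a then c else 0)) = (\<Sum>l\<in>UNIV. if l = a then f l * c else 0)"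
    by (rule sum.cong) auto
  also have "\<dots> = f a * c" by (rule sum_if_eq)
  finally show ?thesis .
qed

lemma chol_P:
  fixes G :: "complex^'n^'n"
  assumes herm: "hermitian G" and r: "G$i$i = of_real r" "r > 0"
  defines "P \<equiv> (\<chi> a b. (if a = b then 1 else 0) - (if a = i then G$i$b / of_real r else 0))"
  shows "ctrans P ** G ** P = (\<chi> a b. G$a$b - G$a$i * G$i$b / of_real r)"
proof -
  have he: "\<And>a b. cnj (G$a$b) = G$b$a" using hermitian_entry[OF herm] .
  have 1: "(ctrans P ** G)$a$k = G$a$k - G$a$i * G$i$k / of_real r" for a k
    unfolding matrix_matrix_mult_def P_def
    by (simp add: left_diff_distrib sum_subtractf if_distrib[where f=cnj] he cong: if_cong)
  show ?thesis
    unfolding vec_eq_iff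
    apply (simp add: matrix_matrix_mult_def[of "ctrans P ** G"] 1)
    apply (simp add: P_def right_diff_distrib left_diff_distrib sum_subtractf r if0_simps cong: if_cong)
    done
qed



lemma F_mult_left:
  fixes M :: "complex^'n^'n" and v :: "complex^'n" and i :: 'n
  defines "F \<equiv> (\<chi> a b. if b = i then v$a else (if a = b then 1 else 0))"
  shows "(F ** M)$a$k = v$a * M$i$k + (if a = i then 0 else M$a$k)"
proof -
  have "(F**M)$a$k = (\<Sum>l\<in>UNIV. (if l = i then v$a * M$i$k else 0) + (if l = a then (if a = i then 0 else M$a$k) else 0))"
    unfolding matrix_matrix_mult_def F_def by (simp only: vec_lambda_beta, rule sum.cong) auto
  then show ?thesis by (simp add: sum.distrib)
qed

lemma F_mult_right:
  fixes M :: "complex^'n^'n" and v :: "complex^'n" and i :: 'n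
  defines "F \<equiv> (\<chi> a b. if b = i then v$a else (if a = b then 1 else 0))"
  shows "(M ** ctrans F)$a$b = M$a$i * cnj (v$b) + (if b = i then 0 else M$a$b)"
proof -
  have "(M ** ctrans F)$a$b = (\<Sum>l\<in>UNIV. (if l = i then M$a$i * cnj (v$b) else 0) + (if l = b then (if b = i then 0 else M$a$b) else 0))"
    unfolding matrix_matrix_mult_def F_def by (simp only: vec_lambda_beta, rule sum.cong) auto
  then show ?thesis by (simp add: sum.distrib)
qed

lemma F_conj:
  fixes M :: "complex^'n^'n" and v :: "complex^'n" and i :: 'n
  assumes "\<And>k. M$i$k = (if k = i then 1 else 0)" "\<And>k. M$k$i = (if k = i then 1 else 0)"
  defines "F \<equiv> (\<chi> a b. if b = i then v$a else (if a = b then 1 else 0))"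
  shows "(F ** M ** ctrans F)$a$b = v$a * cnj (v$b) + (if a \<noteq> i \<and> b \<noteq> i then M$a$b else 0)"
  unfolding F_def F_mult_right F_mult_left by (simp add: assms)

lemma det_F:
  fixes v :: "complex^'n" and i :: 'n
  defines "F \<equiv> (\<chi> a b. if b = i then v$a else (if a = b then 1 else 0))"
  shows "det F = v$i"
proof -
  have "det F = F$i$i" by (rule det_col_id) (simp add: F_def)
  then show ?thesis by (simp add: F_def)
qed

lemma chol_step:
  fixes G :: "complex^'n^'n"
  assumes herm: "hermitian G" and r: "G$i$i = of_real r" "r > 0"
  defines "s \<equiv> complex_of_real (sqrt r)"
  defines "v \<equiv> (\<chi> a. G$a$i / s)"
  defines "G2 \<equiv> (\<chi> a b. G$a$b - G$a$i * G$i$b / of_real r + (if a = i \<and> b = i then 1 else 0))"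
  defines "F \<equiv> (\<chi> a b. if b = i then v$a else (if a = b then 1 else 0))"
  shows "G = F ** G2 ** ctrans F" and "det F = s"
proof -
  have he: "\<And>a b. cnj (G$a$b) = G$b$a" using hermitian_entry[OF herm] .
  have ss: "s * s = of_real r" "cnj s = s" using r by (simp_all add: s_def flip: of_real_mult)
  have sn: "s \<noteq> 0" using r by (simp add: s_def)
  have G2i: "G2$i$k = (if k = i then 1 else 0)" "G2$k$i = (if k = i then 1 else 0)" for k
    using r he[of i k] he[of k i] by (auto simp: G2_def)
  have vv: "v$a * cnj (v$b) = G$a$i * G$i$b / of_real r" for a b
    using sn by (simp add: v_def he ss(2) field_simps flip: ss(1))
  show "G = F ** G2 ** ctrans F"
    unfolding vec_eq_iff F_def
    apply (simp only: F_conj[OF G2i] vv)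
    using r(2) apply (auto simp: G2_def r(1) less_irrefl)
    done
  show "det F = s" unfolding F_def det_F by (simp add: v_def r ss sn flip: ss(1))
qed



lemma qf_E: "qf (\<chi> a b. if a = i \<and> b = i then 1 else 0) w = cnj (w$i) * w$i"
proof -
  have "(\<chi> a b. if a = i \<and> b = i then 1 else 0) *v w = axis i (w$i)"
    by (simp add: vec_eq_iff matrix_vector_mult_def axis_def if0_simps cong: if_cong)
  then show ?thesis by (simp add: qf_def dotc_def axis_def if0_simps cong: if_cong)
qed

lemma G2_pd:
  fixes G :: "complex^'n^'n"
  assumes pd: "pd G" and r: "G$i$i = of_real r" "r > 0"
  shows "pd (\<chi> a b. G$a$b - G$a$i * G$i$b / of_real r + (if a = i \<and> b = i then 1 else 0))"
proof -
  have herm: "hermitian G" using pd by (simp add: pd_def)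
  define P where "P \<equiv> (\<chi> a b. (if a = b then 1 else 0) - (if a = i then G$i$b / of_real r else 0)) :: complex^'n^'n"
  define E where "E \<equiv> (\<chi> a b. if a = i \<and> b = i then 1 else 0) :: complex^'n^'n"
  have eq: "(\<chi> a b. G$a$b - G$a$i * G$i$b / of_real r + (if a = i \<and> b = i then 1 else 0)) = ctrans P ** G ** P + E"
    unfolding chol_P[OF herm r, folded P_def] E_def by (simp add: vec_eq_iff)
  have hE: "hermitian E" by (simp add: hermitian_def E_def vec_eq_iff)
  have Pw: "(P *v w)$j = w$j" if "j \<noteq> i" for w j
    using that by (simp add: P_def matrix_vector_mult_def left_diff_distrib sum_subtractf if0_simps cong: if_cong)
  show ?thesis
    unfolding eq pd_def
  proof (intro conjI allI impI)
    show "hermitian (ctrans P ** G ** P + E)"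
      using hermitian_ctrans_mult[OF herm, of P] hE by (simp add: hermitian_def)
  next
    fix w :: "complex^'n" assume w: "w \<noteq> 0"
    have q: "qf (ctrans P ** G ** P + E) w = qf G (P *v w) + cnj (w$i) * w$i"
      by (simp add: qf_add qf_conj E_def qf_E)
    have g0: "0 \<le> Re (qf G (P *v w))" using pd_psd[OF pd] by (simp add: psd_qf)
    show "0 < Re (qf (ctrans P ** G ** P + E) w)"
    proof (cases "w$i = 0")
      case False
      have "cnj (w$i) * w$i = of_real ((cmod (w$i))^2)" by (metis complex_norm_square mult.commute)
      then have "0 < Re (cnj (w$i) * w$i)"
        using False by simp
      then show ?thesis using q g0 by simp
    next
      case True
      obtain j where j: "w$j \<noteq> 0" using w by (auto simp: vec_eq_iff)
      then have "j \<noteq> i" using True by auto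
      then have "P *v w \<noteq> 0" using Pw[of j w] j by (metis zero_index)
      then have "0 < Re (qf G (P *v w))" using pd by (simp add: pd_def)
      then show ?thesis using q True by simp
    qed
  qed
qed



lemma prod_split_at: fixes i :: "'n::finite" shows "(\<Prod>j\<in>UNIV. f j) = f i * (\<Prod>j\<in>UNIV. if j = i then 1 else (f j :: real))"
proof -
  have "(\<Prod>j\<in>UNIV. f j) = f i * (\<Prod>j\<in>UNIV - {i}. f j)" by (simp add: prod.remove)
  moreover have "(\<Prod>j\<in>UNIV. if j = i then 1 else f j) = (\<Prod>j\<in>UNIV - {i}. f j)"
    by (subst prod.remove[of _ i]) (auto intro!: prod.cong)
  ultimately show ?thesis by simp
qed

lemma chol_ind:
  assumes "finite T"
  shows "\<forall>G::complex^'n^'n. pd G \<and> (\<forall>j k. j \<notin> T \<longrightarrow> G$j$k = (if j = k then 1 else 0)) \<longrightarrow>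
     (\<exists>(W::complex^'n^'n) d. G = W ** ctrans W \<and> det G = of_real d \<and> 0 < d \<and> d \<le> (\<Prod>j\<in>UNIV. Re (G$j$j)))"
  using assms
proof (induction T rule: finite_induct)
  case empty
  show ?case
  proof (intro allI impI)
    fix G :: "complex^'n^'n"
    assume "pd G \<and> (\<forall>j k. j \<notin> {} \<longrightarrow> G$j$k = (if j = k then 1 else 0))"
    then have G1: "G = mat 1" by (simp add: vec_eq_iff mat_def)
    have a: "G = mat 1 ** ctrans (mat 1)" unfolding G1 by (simp only: ctrans_mat1 matrix_mul_lid)
    have b: "det G = of_real 1" unfolding G1 by (simp only: det_I of_real_1)
    have c: "(1::real) \<le> (\<Prod>j\<in>UNIV. Re (G$j$j))" unfolding G1 by (simp add: mat_def)
    show "\<exists>(W::complex^'n^'n) d. G = W ** ctrans W \<and> det G = of_real d \<and> 0 < d \<and> d \<le> (\<Prod>j\<in>UNIV. Re (G$j$j))"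
      using a b c by (intro exI[where x="mat 1"] exI[where x="1::real"]) simp
  qed
next
  case (insert i T)
  show ?case
  proof (intro allI impI)
    fix G :: "complex^'n^'n"
    assume H: "pd G \<and> (\<forall>j k. j \<notin> insert i T \<longrightarrow> G$j$k = (if j = k then 1 else 0))"
    have pdG: "pd G" using H by simp
    have herm: "hermitian G" using pdG by (simp add: pd_def)
    have he: "\<And>a b. cnj (G$a$b) = G$b$a" using hermitian_entry[OF herm] .
    define r where "r = Re (G$i$i)"
    have r: "G$i$i = of_real r" "r > 0"
      using hermitian_diag[OF herm, of i] pd_diag_pos[OF pdG, of i] by (simp_all add: r_def)
    define s where "s \<equiv> complex_of_real (sqrt r)"
    define v where "v \<equiv> (\<chi> a. G$a$i / s)"
    define G2 where "G2 \<equiv> (\<chi> a b. G$a$b - G$a$i * G$i$b / of_real r + (if a = i \<and> b = i then 1 else 0))"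
    define F where "F \<equiv> (\<chi> a b. if b = i then v$a else (if a = b then 1 else 0))"
    note cs = chol_step[OF herm r]
    have eqG: "G = F ** G2 ** ctrans F"
      unfolding s_def v_def G2_def F_def by (rule cs(1))
    have dF: "det F = s"
      unfolding s_def v_def G2_def F_def by (rule cs(2))
    have pd2: "pd G2" unfolding G2_def by (rule G2_pd[OF pdG r])
    have rows2: "\<forall>j k. j \<notin> T \<longrightarrow> G2$j$k = (if j = k then 1 else 0)"
    proof (intro allI impI)
      fix j k assume j: "j \<notin> T"
      show "G2$j$k = (if j = k then 1 else 0)"
      proof (cases "j = i")
        case True
        then show ?thesis using r he[of k i] by (auto simp: G2_def)
      next
        case False
        then have "G$j$k = (if j = k then 1 else 0)" "G$j$i = 0" using H j by auto
        then show ?thesis using False by (simp add: G2_def)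
      qed
    qed
    obtain W2 :: "complex^'n^'n" and d2 where W2: "G2 = W2 ** ctrans W2" "det G2 = of_real d2" "0 < d2"
      "d2 \<le> (\<Prod>j\<in>UNIV. Re (G2$j$j))"
      using insert.IH[rule_format, OF conjI[OF pd2 rows2]] by blast
    have "G = (F ** W2) ** ctrans (F ** W2)"
      using eqG W2(1) by (simp add: ctrans_mult matrix_mul_assoc)
    moreover have "det G = of_real (r * d2)"
    proof -
      have "det G = det F * det G2 * det (ctrans F)" using eqG by (simp add: det_mul)
      also have "\<dots> = s * of_real d2 * cnj s" using dF W2(2) by (simp add: det_ctrans)
      also have "\<dots> = of_real (r * d2)" using r by (simp add: s_def flip: of_real_mult)
      finally show ?thesis .
    qed
    moreover have "0 < r * d2" using r W2 by simp
    moreover have "r * d2 \<le> (\<Prod>j\<in>UNIV. Re (G$j$j))"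
    proof -
      have diag2: "Re (G2$j$j) \<le> (if j = i then 1 else Re (G$j$j))" for j
      proof (cases "j = i")
        case True then show ?thesis using r by (simp add: G2_def)
      next
        case False
        have "G$j$i * G$i$j = of_real ((cmod (G$j$i))^2)"
          using he[of j i] by (metis complex_norm_square)
        then have "Re (G$j$i * G$i$j / of_real r) \<ge> 0" using r by simp
        then show ?thesis using False by (simp add: G2_def)
      qed
      have "(\<Prod>j\<in>UNIV. Re (G2$j$j)) \<le> (\<Prod>j\<in>UNIV. if j = i then 1 else Re (G$j$j))"
        by (rule prod_mono) (use diag2 psd_diag_nonneg[OF pd_psd[OF pd2]] in auto)
      then have "r * d2 \<le> r * (\<Prod>j\<in>UNIV. if j = i then 1 else Re (G$j$j))"
        using W2(4) r by (meson order_trans mult_left_mono less_imp_le)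
      also have "\<dots> = (\<Prod>j\<in>UNIV. Re (G$j$j))"
        using prod_split_at[of "\<lambda>j. Re (G$j$j)" i] r(1) by simp
      finally show ?thesis .
    qed
    ultimately show "\<exists>(W::complex^'n^'n) d. G = W ** ctrans W \<and> det G = of_real d \<and> 0 < d \<and> d \<le> (\<Prod>j\<in>UNIV. Re (G$j$j))"
      by blast
  qed
qed

lemma chol:
  fixes G :: "complex^'n^'n"
  assumes "pd G"
  shows "\<exists>(W::complex^'n^'n) d. G = W ** ctrans W \<and> det G = of_real d \<and> 0 < d \<and> d \<le> (\<Prod>j\<in>UNIV. Re (G$j$j))"
proof -
  have "finite (UNIV::'n set)" by simp
  have "pd G \<and> (\<forall>j k. j \<notin> (UNIV::'n set) \<longrightarrow> G$j$k = (if j = k then 1 else 0))" using assms by simp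
  from chol_ind[OF \<open>finite (UNIV::'n set)\<close>, rule_format, OF this] show ?thesis .
qed



lemma matrix_sub_ldistrib: "(A::'a::ring_1^'n^'m) ** (B - C) = A ** B - A ** C"
  by (simp add: vec_eq_iff matrix_matrix_mult_def right_diff_distrib sum_subtractf)

lemma minv_unique:
  fixes A X :: "'a::field^'n^'n"
  assumes "A ** X = mat 1"
  shows "matrix_inv A = X"
proof -
  have XA: "X ** A = mat 1" using assms matrix_left_right_inverse by blast
  then have inv: "invertible A" using assms by (auto simp: invertible_def)
  let ?Y = "matrix_inv A"
  have "A ** ?Y = mat 1 \<and> ?Y ** A = mat 1"
    unfolding matrix_inv_def by (rule someI_ex) (use inv in \<open>auto simp: invertible_def\<close>)
  then have "?Y ** A = mat 1" by simp
  then have "?Y = ?Y ** (A ** X)" using assms by simp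
  also have "\<dots> = (?Y ** A) ** X" by (simp add: matrix_mul_assoc)
  also have "\<dots> = X" using \<open>?Y ** A = mat 1\<close> by simp
  finally show ?thesis .
qed

lemma logdet_le_trace:
  fixes G :: "complex^'n^'n"
  assumes "pd G"
  shows "ln (Re (det G)) \<le> Re (trace G) - real CARD('n)"
proof -
  obtain W :: "complex^'n^'n" and d where Wd: "G = W ** ctrans W" "det G = of_real d" "0 < d" "d \<le> (\<Prod>j\<in>UNIV. Re (G$j$j))"
    using chol[OF assms] by blast
  have pos: "0 \<le> Re (G$j$j)" for j using psd_diag_nonneg[OF pd_psd[OF assms]] .
  have "(\<Prod>j\<in>UNIV. Re (G$j$j)) \<le> (\<Prod>j\<in>UNIV. exp (Re (G$j$j) - 1))"
    by (rule prod_mono) (use pos exp_ge_add_one_self[of "Re (G$j$j) - 1" for j] in \<open>auto\<close>)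
  also have "\<dots> = exp (\<Sum>j\<in>UNIV. Re (G$j$j) - 1)" by (simp add: exp_sum)
  also have "(\<Sum>j\<in>UNIV. Re (G$j$j) - 1) = Re (trace G) - real CARD('n)"
    by (simp add: trace_def sum_subtractf)
  finally have "d \<le> exp (Re (trace G) - real CARD('n))" using Wd(4) by linarith
  then have "ln d \<le> Re (trace G) - real CARD('n)" using Wd(3) by (metis ln_exp ln_le_cancel_iff exp_gt_zero)
  then show ?thesis using Wd(2) by simp
qed

lemma logdet_concave:
  fixes B B' :: "complex^'n^'n"
  assumes pdB: "pd B" and pdB': "pd B'"
  shows "ln (Re (det B')) \<le> ln (Re (det B)) + Re (trace (matrix_inv B ** (B' - B)))"
proof -
  obtain W :: "complex^'n^'n" and d where Wd: "B = W ** ctrans W" "det B = of_real d" "0 < d"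
    using chol[OF pdB] by blast
  obtain W' :: "complex^'n^'n" and d' where Wd': "det B' = of_real d'" "0 < d'"
    using chol[OF pdB'] by blast
  have dB: "det B = det W * cnj (det W)" using Wd(1) by (simp add: det_mul det_ctrans)
  then have "det W \<noteq> 0" using Wd(2,3) by auto
  then have "invertible W" by (simp add: invertible_det_nz)
  then obtain M where M: "W ** M = mat 1" "M ** W = mat 1" unfolding invertible_def by blast
  define C where "C = M ** B' ** ctrans M"
  have hC: "hermitian C"
    using hermitian_ctrans_mult[of B' "ctrans M"] pdB' by (simp add: pd_def C_def)
  have cMW: "ctrans W ** ctrans M = mat 1" using M(2) by (simp flip: ctrans_mult)
  have pdC: "pd C"
    unfolding pd_def
  proof (intro conjI allI impI hC)
    fix w :: "complex^'n" assume w: "w \<noteq> 0"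
    have "qf C w = qf B' (ctrans M *v w)"
      using qf_conj[of "ctrans M" B' w] by (simp add: C_def)
    moreover have "ctrans M *v w \<noteq> 0"
    proof
      assume "ctrans M *v w = 0"
      then have "ctrans W *v (ctrans M *v w) = 0" by simp
      then show False using w cMW by (simp add: matrix_vector_mul_assoc)
    qed
    ultimately show "0 < Re (qf C w)" using pdB' by (simp add: pd_def)
  qed
  have dMW: "det M * det W = 1" using M(2) by (metis det_I det_mul)
  have "det C * det B = det B'"
  proof -
    have "det C * det B = det B' * ((det M * det W) * cnj (det M * det W))"
      by (simp add: C_def det_mul det_ctrans dB mult_ac)
    then show ?thesis using dMW by simp
  qed
  then have dC: "Re (det C) = d' / d" using Wd(2,3) Wd'(1)
    by (metis Re_complex_of_real nonzero_eq_divide_eq of_real_divide of_real_eq_0_iff order_less_irrefl)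
  have inv: "matrix_inv B = ctrans M ** M"
  proof (rule minv_unique)
    have "(ctrans M ** M) ** B = ctrans M ** (M ** W) ** ctrans W"
      using Wd(1) by (simp add: matrix_mul_assoc)
    also have "\<dots> = ctrans (W ** M)" by (simp add: M(2) ctrans_mult)
    also have "\<dots> = mat 1" by (simp add: M(1))
    finally show "B ** (ctrans M ** M) = mat 1" using matrix_left_right_inverse by blast
  qed
  have trC: "trace C = trace (matrix_inv B ** B')"
    unfolding inv C_def by (metis matrix_mul_assoc trace_mul_sym)
  have "ln (d' / d) \<le> Re (trace C) - real CARD('n)"
    using logdet_le_trace[OF pdC] dC by simp
  moreover have "Re (trace (matrix_inv B ** (B' - B))) = Re (trace C) - real CARD('n)"
  proof -
    have "matrix_inv B ** B = mat 1" unfolding inv using Wd(1) M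
      by (simp add: matrix_mul_assoc) (metis ctrans_mult ctrans_mat1 matrix_mul_assoc matrix_mul_lid)
    then show ?thesis by (simp add: matrix_sub_ldistrib trace_sub trC trace_I)
  qed
  ultimately show ?thesis using Wd Wd' by (simp add: ln_div)
qed



lemma eps_nonneg:
  fixes a b :: real
  assumes "\<And>e. e > 0 \<Longrightarrow> 0 \<le> a + e * b"
  shows "0 \<le> a"
proof (rule ccontr)
  assume a: "\<not> 0 \<le> a"
  define e where "e = - a / (2 * (\<bar>b\<bar> + 1))"
  have e: "e > 0" using a by (simp add: e_def field_simps)
  have "e * b \<le> e * \<bar>b\<bar>" using e by (simp add: mult_left_mono)
  also have "e * \<bar>b\<bar> = (-a) * (\<bar>b\<bar> / (2 * (\<bar>b\<bar> + 1)))" by (simp add: e_def field_simps)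
  also have "\<dots> \<le> (-a) * (1/2)"
    using a by (intro mult_left_mono) (auto simp: field_simps)
  finally have "a + e * b < 0" using a by linarith
  then show False using assms[OF e] by linarith
qed

lemma psd_add: "psd A \<Longrightarrow> psd B \<Longrightarrow> psd (A + B)"
  by (simp add: psd_qf qf_add hermitian_def)

lemma qf_scaleR: "qf (c *\<^sub>R A) w = c *\<^sub>R qf A w"
  apply (simp add: qf_def dotc_def matrix_vector_mult_def)
  apply (simp add: scaleR_conv_of_real sum_distrib_left mult_ac)
  done

lemma matrix_add_rdistrib: "((A::'a::semiring_1^'n^'m) + B) ** C = A ** C + B ** C"
  by (simp add: vec_eq_iff matrix_matrix_mult_def distrib_right sum.distrib)

lemma psd_scaleR: "psd A \<Longrightarrow> 0 \<le> c \<Longrightarrow> psd (c *\<^sub>R A)"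
  by (simp add: psd_qf qf_scaleR hermitian_def)

lemma qf_id: "Re (qf (mat 1) w) = (\<Sum>i\<in>UNIV. (Re (w$i))^2 + (Im (w$i))^2)"
  by (simp add: qf_def dotc_def power2_eq_square)

lemma qf_id_pos: "w \<noteq> 0 \<Longrightarrow> 0 < Re (qf (mat 1) w)"
  unfolding qf_id
proof -
  assume "w \<noteq> 0"
  then obtain j where "w$j \<noteq> 0" by (metis vec_eq_iff zero_index)
  then have "0 < (Re (w$j))^2 + (Im (w$j))^2" by (simp add: complex_neq_0)
  also have "\<dots> \<le> (\<Sum>i\<in>UNIV. (Re (w$i))^2 + (Im (w$i))^2)"
    by (rule member_le_sum) auto
  finally show "0 < (\<Sum>i\<in>UNIV. (Re (w$i))^2 + (Im (w$i))^2)" .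
qed

lemma hermitian_mat1: "hermitian (mat 1 :: complex^'n^'n)"
  by (simp add: hermitian_def)

lemma pd_plus_psd: "psd K \<Longrightarrow> pd (mat 1 + K)"
  unfolding pd_def
  using qf_id_pos by (auto simp: psd_qf qf_add hermitian_def intro: add_pos_nonneg)

lemma psd_conj: "psd Q \<Longrightarrow> psd (H ** Q ** ctrans H)"
  using hermitian_ctrans_mult[of Q "ctrans H"] qf_conj[of "ctrans H" Q]
  by (simp add: psd_qf)

lemma pd_eps: "psd X \<Longrightarrow> e > 0 \<Longrightarrow> pd (X + e *\<^sub>R mat 1)"
  unfolding pd_def
  using qf_id_pos by (auto simp: psd_qf qf_add qf_scaleR hermitian_def intro!: add_nonneg_pos mult_pos_pos)

lemma trace_conj_nonneg:
  assumes "psd Y"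
  shows "0 \<le> Re (trace (ctrans W ** Y ** W))"
proof -
  have "(ctrans W ** Y ** W)$a$a = qf Y (W *v axis a 1)" for a
    using qf_conj[of W Y "axis a 1"] qf_axis[of "ctrans W ** Y ** W" a] by simp
  then show ?thesis using assms by (simp add: trace_def psd_qf sum_nonneg)
qed

lemma trace_psd_nonneg: fixes X Y :: "complex^'n^'n" shows "psd X \<Longrightarrow> psd Y \<Longrightarrow> 0 \<le> Re (trace (X ** Y))"
proof -
  assume X: "psd X" and Y: "psd Y"
  show ?thesis
  proof (rule eps_nonneg)
    fix e :: real assume e: "e > 0"
    obtain W :: "complex^'n^'n" and d where W: "X + e *\<^sub>R mat 1 = W ** ctrans W"
      using chol[OF pd_eps[OF X e]] by blast
    have "trace ((X + e *\<^sub>R mat 1) ** Y) = trace (ctrans W ** Y ** W)"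
      unfolding W by (metis matrix_mul_assoc trace_mul_sym)
    moreover have "(X + e *\<^sub>R mat 1) ** Y = X ** Y + e *\<^sub>R Y"
      by (simp add: matrix_add_rdistrib flip: scalar_matrix_assoc)
    ultimately have eq: "trace (X ** Y) + trace (e *\<^sub>R Y) = trace (ctrans W ** Y ** W)"
      by (simp add: trace_add)
    have "Re (trace (X ** Y)) + e * Re (trace Y) = Re (trace (ctrans W ** Y ** W))"
      unfolding eq[symmetric] by simp
    then show "0 \<le> Re (trace (X ** Y)) + e * Re (trace Y)"
      using trace_conj_nonneg[OF Y] by simp
  qed
qed

lemma inner_psd: "psd X \<Longrightarrow> psd Y \<Longrightarrow> 0 \<le> inner X Y"
  by (simp add: inner_trace psd_def hermitian_def trace_psd_nonneg[unfolded psd_def hermitian_def])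



lemma dotc_add_left: "dotc (u + w) x = dotc u x + dotc w x"
  by (simp add: dotc_def distrib_right sum.distrib)
lemma dotc_add_right: "dotc x (u + w) = dotc x u + dotc x w"
  by (simp add: dotc_def distrib_left sum.distrib)

lemma qf_plus: "qf X (u + w) = qf X u + qf X w + dotc u (X *v w) + dotc w (X *v u)"
  by (simp add: qf_def matrix_vector_right_distrib dotc_add_left dotc_add_right)

lemma qf_two: "qf X (axis i a + axis j b) = cnj a * (X$i$i * a) + cnj b * (X$j$j * b) + cnj a * (X$i$j * b) + cnj b * (X$j$i * a)"
  unfolding qf_plus by (simp add: qf_def)

lemma psd_entry_bound:
  fixes X :: "complex^'n^'n"
  assumes psd: "psd X"
  shows "(cmod (X$i$j))^2 \<le> Re (X$i$i) * Re (X$j$j)"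
proof -
  have herm: "hermitian X" using psd by (simp add: psd_def)
  have q: "0 \<le> Re (qf X v)" for v using psd by (simp add: psd_qf)
  define p where "p = Re (X$i$i)"
  define r where "r = Re (X$j$j)"
  define z where "z = X$j$i"
  have Xii: "X$i$i = of_real p" using hermitian_diag[OF herm] by (simp add: p_def)
  have Xjj: "X$j$j = of_real r" using hermitian_diag[OF herm] by (simp add: r_def)
  have Xij: "X$i$j = cnj z" using hermitian_entry[OF herm, of j i] by (simp add: z_def)
  have p0: "0 \<le> p" and r0: "0 \<le> r" using psd_diag_nonneg[OF psd] by (simp_all add: p_def r_def)
  have cz: "(cmod z)^2 = (Re z)^2 + (Im z)^2" by (simp add: cmod_power2)
  show ?thesis
  proof (cases "i = j")
    case True
    then show ?thesis using Xii p0 by (simp add: power2_eq_square)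
  next
    case False
    show ?thesis
    proof (cases "r > 0")
      case True
      have "Re (qf X (axis i (of_real r) + axis j (- z))) = r * (r * p - (cmod z)^2)"
        unfolding qf_two Xii Xjj Xij z_def[symmetric] cz
        by (simp add: algebra_simps power2_eq_square)
      then have "0 \<le> r * (r * p - (cmod z)^2)" using q by metis
      then have "(cmod z)^2 \<le> r * p" using True by (simp add: zero_le_mult_iff)
      then show ?thesis using Xij by (simp add: p_def r_def mult.commute)
    next
      case False
      then have r: "r = 0" using r0 by simp
      have "z = 0"
      proof (rule ccontr)
        assume z: "z \<noteq> 0"
        then have zp: "(cmod z)^2 > 0" by simp
        define t where "t = (p + 1) / (2 * (cmod z)^2)"
        have "Re (qf X (axis i 1 + axis j (- (of_real t * z)))) = p - 2 * t * (cmod z)^2"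
          unfolding qf_two Xii Xjj Xij z_def[symmetric] cz r
          by (simp add: algebra_simps power2_eq_square)
        also have "\<dots> = -1" using zp by (simp add: t_def field_simps)
        finally show False using q by (metis neg_0_le_iff_le not_one_le_zero)
      qed
      then show ?thesis using Xij r p0 by (simp add: r_def)
    qed
  qed
qed

lemma norm_sq_entries: "(norm (X::complex^'n^'m))^2 = (\<Sum>i\<in>UNIV. \<Sum>j\<in>UNIV. (cmod (X$i$j))^2)"
  by (simp add: norm_vec_def L2_set_def sum_nonneg)

lemma psd_norm_le_trace:
  fixes X :: "complex^'n^'n"
  assumes "psd X"
  shows "(norm X)^2 \<le> (Re (trace X))^2"
proof -
  have "(norm X)^2 \<le> (\<Sum>i\<in>UNIV. \<Sum>j\<in>UNIV. Re (X$i$i) * Re (X$j$j))"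
    unfolding norm_sq_entries
    by (intro sum_mono psd_entry_bound[OF assms])
  also have "\<dots> = (Re (trace X))^2"
    by (simp add: trace_def power2_eq_square sum_product)
  finally show ?thesis .
qed



lemma closed_Xset: "closed (Xset :: (complex^('k::finite \<times> 't::finite)^('k \<times> 't)) set)"
proof -
  have 1: "closed {X :: complex^('k \<times> 't)^('k \<times> 't). block_diag X}"
    unfolding block_diag_def
    apply (intro closed_Collect_all)
    subgoal for k i l j
      by (cases "k = l") (auto intro!: closed_Collect_eq continuous_intros)
    done
  have 2: "closed {X :: complex^('k \<times> 't)^('k \<times> 't). \<forall>k. psd (blk X k)}"
    unfolding psd_def hermitian_def ctrans_def blk_def matrix_vector_mult_def
    by (auto intro!: closed_Collect_all closed_Collect_conj closed_Collect_eq closed_Collect_le continuous_intros)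
  have 3: "closed {X :: complex^('k \<times> 't)^('k \<times> 't). (\<Sum>k\<in>UNIV. Re (trace (blk X k))) \<le> 1}"
    unfolding trace_def blk_def
    by (auto intro!: closed_Collect_le continuous_intros)
  have eq: "(Xset :: (complex^('k \<times> 't)^('k \<times> 't)) set) = {X :: complex^('k \<times> 't)^('k \<times> 't). block_diag X} \<inter> {X. \<forall>k. psd (blk X k)} \<inter>
     {X. (\<Sum>k\<in>UNIV. Re (trace (blk X k))) \<le> 1}"
    by (auto simp: Xset_def)
  show ?thesis unfolding eq by (intro closed_Int 1 2 3)
qed



lemma sum_pairs: "(\<Sum>p\<in>(UNIV::('k::finite \<times> 't::finite) set). f p) = (\<Sum>k\<in>UNIV. \<Sum>a\<in>UNIV. f (k, a))"
  by (simp add: sum.cartesian_product UNIV_Times_UNIV[symmetric] del: UNIV_Times_UNIV)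

lemma blk_add: "blk (A + B) k = blk A k + blk B k"
  by (simp add: blk_def vec_eq_iff)
lemma blk_scaleR: "blk (c *\<^sub>R A) k = c *\<^sub>R blk A k"
  by (simp add: blk_def vec_eq_iff)
lemma blk_zero: "blk 0 k = 0"
  by (simp add: blk_def vec_eq_iff)

lemma block_diag_add: "block_diag A \<Longrightarrow> block_diag B \<Longrightarrow> block_diag (A + B)"
  by (simp add: block_diag_def)
lemma block_diag_scaleR: "block_diag A \<Longrightarrow> block_diag (c *\<^sub>R A)"
  by (simp add: block_diag_def)

lemma trace_blocks: "trace (X :: complex^('k::finite \<times> 't::finite)^('k \<times> 't)) = (\<Sum>k\<in>UNIV. trace (blk X k))"
  by (simp add: trace_def sum_pairs blk_def)

lemma mult_block:
  fixes X :: "complex^('k::finite \<times> 't::finite)^('k \<times> 't)"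
  assumes "block_diag X"
  shows "(X *v v)$(k,a) = (blk X k *v (\<chi> b. v$(k,b)))$a"
proof -
  have "(X *v v)$(k,a) = (\<Sum>l\<in>UNIV. \<Sum>b\<in>UNIV. X$(k,a)$(l,b) * v$(l,b))"
    by (simp add: matrix_vector_mult_def sum_pairs)
  also have "\<dots> = (\<Sum>l\<in>UNIV. if l = k then (\<Sum>b\<in>UNIV. X$(k,a)$(k,b) * v$(k,b)) else 0)"
    by (rule sum.cong) (use assms in \<open>auto simp: block_diag_def\<close>)
  also have "\<dots> = (blk X k *v (\<chi> b. v$(k,b)))$a"
    by (simp add: matrix_vector_mult_def blk_def)
  finally show ?thesis .
qed

lemma psd_blocks:
  fixes X :: "complex^('k::finite \<times> 't::finite)^('k \<times> 't)"
  assumes bd: "block_diag X" and ps: "\<And>k. psd (blk X k)"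
  shows "psd X"
  unfolding psd_qf
proof (intro conjI allI)
  show "hermitian X"
    unfolding hermitian_def vec_eq_iff
  proof (intro allI)
    fix p q :: "'k \<times> 't"
    obtain k a where p: "p = (k,a)" by fastforce
    obtain l b where q: "q = (l,b)" by fastforce
    show "ctrans X $ p $ q = X $ p $ q"
    proof (cases "k = l")
      case True
      have "hermitian (blk X k)" using ps[of k] by (simp add: psd_def)
      from hermitian_entry[OF this, of b a] show ?thesis using True by (simp add: p q blk_def)
    next
      case False
      then show ?thesis using bd by (simp add: p q block_diag_def)
    qed
  qed
  fix v :: "complex^('k \<times> 't)"
  have "qf X v = (\<Sum>k\<in>UNIV. qf (blk X k) (\<chi> b. v$(k,b)))"
    by (simp add: qf_def dotc_def sum_pairs mult_block[OF bd])
  then show "0 \<le> Re (qf X v)" using ps by (simp add: psd_qf sum_nonneg)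
qed

lemma Xset_psd: "X \<in> Xset \<Longrightarrow> psd X"
  by (rule psd_blocks) (auto simp: Xset_def)

lemma Xset_trace: "X \<in> Xset \<Longrightarrow> 0 \<le> Re (trace X) \<and> Re (trace X) \<le> 1"
proof -
  assume X: "X \<in> Xset"
  have "0 \<le> Re (trace X)" unfolding trace_def Re_sum
    by (rule sum_nonneg) (rule psd_diag_nonneg[OF Xset_psd[OF X]])
  moreover have "Re (trace X) \<le> 1" using X unfolding trace_blocks Re_sum by (simp add: Xset_def)
  ultimately show ?thesis by simp
qed

lemma Xset_norm: "X \<in> Xset \<Longrightarrow> (norm X)^2 \<le> 1"
proof -
  assume X: "X \<in> Xset"
  have "(norm X)^2 \<le> (Re (trace X))^2" by (rule psd_norm_le_trace[OF Xset_psd[OF X]])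
  also have "\<dots> \<le> 1" using Xset_trace[OF X] by (simp add: power_le_one)
  finally show ?thesis .
qed

lemma Xset_diam: "X \<in> Xset \<Longrightarrow> Y \<in> Xset \<Longrightarrow> (norm (X - Y))^2 \<le> 2"
proof -
  assume X: "X \<in> Xset" and Y: "Y \<in> Xset"
  have "(norm (X - Y))^2 = (norm X)^2 + (norm Y)^2 - 2 * inner X Y"
    by (simp add: power2_norm_eq_inner inner_diff_left inner_diff_right inner_commute)
  then show ?thesis using Xset_norm[OF X] Xset_norm[OF Y] inner_psd[OF Xset_psd[OF X] Xset_psd[OF Y]]
    by linarith
qed

lemma zero_Xset: "0 \<in> Xset"
  by (simp add: Xset_def block_diag_def blk_zero psd_def hermitian_def vec_eq_iff trace_def)

lemma convex_Xset: "convex (Xset :: (complex^('k::finite \<times> 't::finite)^('k \<times> 't)) set)"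
proof (rule convexI)
  fix x y :: "complex^('k \<times> 't)^('k \<times> 't)" and u v :: real
  assume x: "x \<in> Xset" and y: "y \<in> Xset" and u: "0 \<le> u" and v: "0 \<le> v" and uv: "u + v = 1"
  have "(\<Sum>k\<in>UNIV. Re (trace (blk (u *\<^sub>R x + v *\<^sub>R y) k))) =
      u * (\<Sum>k\<in>UNIV. Re (trace (blk x k))) + v * (\<Sum>k\<in>UNIV. Re (trace (blk y k)))"
    by (simp add: blk_add blk_scaleR trace_add sum.distrib sum_distrib_left)
  also have "\<dots> \<le> u * 1 + v * 1"
    using x y u v by (intro add_mono mult_left_mono) (auto simp: Xset_def)
  finally show "u *\<^sub>R x + v *\<^sub>R y \<in> Xset"
    using x y u v uv
    by (auto simp: Xset_def blk_add blk_scaleR intro!: block_diag_add block_diag_scaleR psd_add psd_scaleR)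
qed



lemma proj_props:
  fixes Y :: "complex^('k::finite \<times> 't::finite)^('k \<times> 't)"
  shows "proj Y \<in> Xset \<and> (\<forall>Z\<in>Xset. norm (proj Y - Z) \<le> norm (Y - Z))"
proof -
  obtain x where x: "x \<in> Xset" "\<And>y. y \<in> Xset \<Longrightarrow> dist Y x \<le> dist Y y"
    using distance_attains_inf[OF closed_Xset, of Y] zero_Xset by blast
  have "is_arg_min (\<lambda>X. (frob (X - Y))\<^sup>2) (\<lambda>X. X \<in> Xset) x"
    unfolding is_arg_min_def
  proof (intro conjI notI x(1))
    assume "\<exists>y. y \<in> Xset \<and> (frob (y - Y))\<^sup>2 < (frob (x - Y))\<^sup>2"
    then obtain y where y: "y \<in> Xset" "(frob (y - Y))\<^sup>2 < (frob (x - Y))\<^sup>2" by blast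
    have "dist Y x \<le> dist Y y" using x(2)[OF y(1)] .
    then have "(frob (x - Y))\<^sup>2 \<le> (frob (y - Y))\<^sup>2"
      by (simp add: dist_norm norm_frob[symmetric] norm_minus_commute)
    then show False using y(2) by simp
  qed
  then have am: "is_arg_min (\<lambda>X. (frob (X - Y))\<^sup>2) (\<lambda>X. X \<in> Xset) (proj Y)"
    unfolding proj_def arg_min_def by (rule someI)
  define P where "P = proj Y"
  have P: "P \<in> Xset" using am by (simp add: is_arg_min_def P_def)
  have Pmin: "\<forall>z\<in>Xset. dist Y P \<le> dist Y z"
  proof
    fix z :: "complex^('k \<times> 't)^('k \<times> 't)" assume z: "z \<in> Xset"
    have "\<not> (frob (z - Y))\<^sup>2 < (frob (P - Y))\<^sup>2" using am z by (auto simp: is_arg_min_def P_def)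
    then have "norm (P - Y) \<le> norm (z - Y)"
      by (simp add: norm_frob[symmetric] not_less power_mono_iff)
    then show "dist Y P \<le> dist Y z" by (simp add: dist_norm norm_minus_commute)
  qed
  have "norm (P - Z) \<le> norm (Y - Z)" if Z: "Z \<in> Xset" for Z
  proof -
    have ip: "inner (Y - P) (Z - P) \<le> 0"
      by (rule any_closest_point_dot[OF convex_Xset closed_Xset P Z Pmin])
    have "(norm (Y - Z))^2 = (norm (Y - P))^2 + (norm (Z - P))^2 - 2 * inner (Y - P) (Z - P)"
      by (simp add: power2_norm_eq_inner inner_diff_left inner_diff_right inner_commute)
    then have "(norm (Z - P))^2 \<le> (norm (Y - Z))^2" using ip zero_le_power2[of "norm (Y - P)"] by linarith
    then have "norm (Z - P) \<le> norm (Y - Z)" by (simp add: power_mono_iff)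
    then show ?thesis by (simp add: norm_minus_commute)
  qed
  then show ?thesis using P by (simp add: P_def)
qed



lemma matrix_sub_rdistrib: "((A::'a::ring_1^'n^'m) - B) ** C = A ** C - B ** C"
  by (simp add: vec_eq_iff matrix_matrix_mult_def left_diff_distrib sum_subtractf)

lemma Re_trace_ctrans_herm:
  fixes A Z :: "complex^'n^'n"
  assumes "hermitian Z"
  shows "Re (trace (ctrans A ** Z)) = Re (trace (A ** Z))"
proof -
  have "trace (ctrans A ** Z) = trace (ctrans A ** ctrans Z)" using assms by (simp add: hermitian_def)
  also have "\<dots> = cnj (trace (Z ** A))" by (simp add: ctrans_mult[symmetric] trace_ctrans)
  also have "\<dots> = cnj (trace (A ** Z))" using trace_mul_sym[of Z A] by simp
  finally show ?thesis by simp
qed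

lemma u_concave:
  fixes H :: "complex^'c^'r" and X Y :: "complex^'c^'c"
  assumes Pc: "Pc > 0" and Pmax: "Pmax > 0"
    and X: "psd X" "0 \<le> Re (trace X)" "Re (trace X) \<le> 1"
    and Y: "psd Y" "0 \<le> Re (trace Y)" "Re (trace Y) \<le> 1"
  shows "EE Pc H (Qmap Pc Pmax Y) \<le> EE Pc H (Qmap Pc Pmax X) + inner (grad Pc Pmax H X) (Y - X)"
proof -
  define tX where "tX = Re (trace X)"
  define tY where "tY = Re (trace Y)"
  define cX where "cX = Pc + Pmax * (1 - tX)"
  define cY where "cY = Pc + Pmax * (1 - tY)"
  define aX where "aX = Pc * Pmax / cX"
  define aY where "aY = Pc * Pmax / cY"
  have cX: "cX \<ge> Pc" and cY: "cY \<ge> Pc" using X Y Pmax by (simp_all add: cX_def cY_def tX_def tY_def)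
  have aXp: "aX > 0" and aYp: "aY > 0" using cX cY Pc Pmax by (simp_all add: aX_def aY_def)
  define QX where "QX = aX *\<^sub>R X"
  define QY where "QY = aY *\<^sub>R Y"
  have QXm: "Qmap Pc Pmax X = QX" by (simp add: Qmap_def QX_def aX_def cX_def tX_def)
  have QYm: "Qmap Pc Pmax Y = QY" by (simp add: Qmap_def QY_def aY_def cY_def tY_def)
  have psdQX: "psd QX" unfolding QX_def using X(1) aXp by (simp add: psd_scaleR)
  have psdQY: "psd QY" unfolding QY_def using Y(1) aYp by (simp add: psd_scaleR)
  define BX where "BX = mat 1 + H ** QX ** ctrans H"
  define BY where "BY = mat 1 + H ** QY ** ctrans H"
  have pdBX: "pd BX" unfolding BX_def by (rule pd_plus_psd[OF psd_conj[OF psdQX]])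
  have pdBY: "pd BY" unfolding BY_def by (rule pd_plus_psd[OF psd_conj[OF psdQY]])
  define A where "A = Amat H QX"
  define RX where "RX = rate H QX"
  define RY where "RY = rate H QY"
  define bX where "bX = Re (trace (A ** X))"
  define bY where "bY = Re (trace (A ** Y))"
  have RX: "RX = ln (Re (det BX))" by (simp add: RX_def rate_def BX_def)
  have RY: "RY = ln (Re (det BY))" by (simp add: RY_def rate_def BY_def)
  have "BY - BX = H ** (QY - QX) ** ctrans H"
    by (simp add: BX_def BY_def matrix_sub_ldistrib matrix_sub_rdistrib)
  then have "trace (matrix_inv BX ** (BY - BX)) = trace (A ** (QY - QX))"
  proof -
    assume D: "BY - BX = H ** (QY - QX) ** ctrans H"
    have "trace (matrix_inv BX ** (BY - BX)) = trace ((matrix_inv BX ** (H ** (QY - QX))) ** ctrans H)"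
      unfolding D by (simp only: matrix_mul_assoc)
    also have "\<dots> = trace (ctrans H ** (matrix_inv BX ** (H ** (QY - QX))))"
      by (rule trace_mul_sym)
    also have "\<dots> = trace (A ** (QY - QX))"
      unfolding A_def Amat_def BX_def[symmetric] by (simp only: matrix_mul_assoc)
    finally show ?thesis .
  qed
  also have "\<dots> = aY *\<^sub>R trace (A ** Y) - aX *\<^sub>R trace (A ** X)"
    by (simp add: QX_def QY_def matrix_sub_ldistrib matrix_scalar_ac trace_sub, simp add: trace_scaleR flip: scalar_matrix_assoc)
  finally have trD: "Re (trace (matrix_inv BX ** (BY - BX))) = aY * bY - aX * bX"
    by (simp add: bX_def bY_def)
  have key: "RY \<le> RX + aY * bY - aX * bX"
    using logdet_concave[OF pdBX pdBY] trD RX RY by simp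
  define s where "s = Pmax / (Pc + Pmax)"
  define g where "g = (Re (trace (A ** QX)) - RX) / Pc"
  have gX: "Re (trace (A ** QX)) = aX * bX" by (simp add: QX_def matrix_scalar_ac bX_def, simp add: trace_scaleR flip: scalar_matrix_assoc)
  have gradeq: "grad Pc Pmax H X = s *\<^sub>R (A + g *\<^sub>R mat 1)"
    by (simp add: grad_def Let_def QXm A_def s_def g_def RX_def)
  have hZ: "hermitian (Y - X)" using X(1) Y(1) by (simp add: psd_def hermitian_def)
  have "inner (grad Pc Pmax H X) (Y - X) = Re (trace (ctrans (s *\<^sub>R (A + g *\<^sub>R mat 1)) ** (Y - X)))"
    by (simp add: inner_trace gradeq)
  also have "\<dots> = s * (Re (trace (ctrans A ** (Y - X))) + g * Re (trace (Y - X)))"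
    by (simp add: matrix_add_rdistrib flip: scalar_matrix_assoc, simp add: trace_add)
  also have "\<dots> = s * (bY - bX + g * (tY - tX))"
    unfolding Re_trace_ctrans_herm[OF hZ] by (simp add: matrix_sub_ldistrib trace_sub bX_def bY_def tX_def tY_def)
  finally have inner_eq: "inner (grad Pc Pmax H X) (Y - X) = s * (bY - bX + g * (tY - tX))" .
  have EX: "EE Pc H (Qmap Pc Pmax X) = RX * cX / (Pc * (Pc + Pmax))"
  proof -
    have "Pc + Re (trace QX) = Pc * (Pc + Pmax) / cX"
      using cX Pc by (simp add: QX_def aX_def cX_def tX_def[symmetric] field_simps)
    then show ?thesis using cX Pc by (simp add: EE_def QXm RX_def)
  qed
  have EY: "EE Pc H (Qmap Pc Pmax Y) = RY * cY / (Pc * (Pc + Pmax))"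
  proof -
    have "Pc + Re (trace QY) = Pc * (Pc + Pmax) / cY"
      using cY Pc by (simp add: QY_def aY_def cY_def tY_def[symmetric] field_simps)
    then show ?thesis using cY Pc by (simp add: EE_def QYm RY_def)
  qed
  have cYp: "cY > 0" using cY Pc by simp
  have "RY * cY \<le> (RX + aY * bY - aX * bX) * cY" using key cYp by (simp add: mult_right_mono)
  also have "\<dots> = RX * cX + Pc * (Pc + Pmax) * (s * (bY - bX + g * (tY - tX)))"
  proof -
    define d where "d = tY - tX"
    have h1: "aY * cY = Pc * Pmax" using cYp by (simp add: aY_def)
    have h2: "aX * cX = Pc * Pmax" using cX Pc by (simp add: aX_def)
    have h3: "cY = cX - Pmax * d" by (simp add: cX_def cY_def d_def algebra_simps)
    have h4: "Pc * Pmax = Pc * (Pc + Pmax) * s" using Pc Pmax by (simp add: s_def)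
    have h5: "aX * bX - RX = Pc * g" using Pc by (simp add: g_def gX)
    have "(RX + aY * bY - aX * bX) * cY = RX * cY + (aY * cY) * bY - aX * bX * cY"
      by (simp add: algebra_simps)
    also have "\<dots> = RX * (cX - Pmax * d) + Pc * Pmax * bY - aX * bX * (cX - Pmax * d)"
      unfolding h1 by (simp only: h3)
    also have "\<dots> = RX * cX - RX * Pmax * d + Pc * Pmax * bY - (aX * cX) * bX + aX * bX * Pmax * d"
      by (simp add: algebra_simps)
    also have "\<dots> = RX * cX + Pc * Pmax * (bY - bX) + Pmax * (aX * bX - RX) * d"
      unfolding h2 by (simp add: algebra_simps)
    also have "\<dots> = RX * cX + (Pc * Pmax) * (bY - bX + g * d)"
      unfolding h5 by (simp add: algebra_simps)
    also have "\<dots> = RX * cX + Pc * (Pc + Pmax) * (s * (bY - bX + g * d))"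
      unfolding h4 by (simp only: mult.assoc)
    finally show ?thesis by (simp add: d_def)
  qed
  finally have ineq: "RY * cY \<le> RX * cX + Pc * (Pc + Pmax) * (s * (bY - bX + g * (tY - tX)))" .
  define K where "K = Pc * (Pc + Pmax)"
  define E where "E = s * (bY - bX + g * (tY - tX))"
  have Kp: "K > 0" using Pc Pmax by (simp add: K_def)
  have "RY * cY / K \<le> (RX * cX + K * E) / K"
    by (rule divide_right_mono) (use ineq Kp in \<open>simp_all add: K_def E_def\<close>)
  also have "\<dots> = RX * cX / K + E" using Kp by (simp add: add_divide_distrib)
  finally have "RY * cY / (Pc * (Pc + Pmax)) \<le> RX * cX / (Pc * (Pc + Pmax)) + s * (bY - bX + g * (tY - tX))"
    by (simp add: K_def E_def)
  then show ?thesis unfolding EX EY inner_eq .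
qed



lemma tele:
  fixes D \<gamma> :: "nat \<Rightarrow> real"
  assumes D: "\<And>n. n \<ge> 1 \<Longrightarrow> 0 \<le> D n \<and> D n \<le> 2"
    and pos: "\<And>n. n \<ge> 1 \<Longrightarrow> \<gamma> n > 0"
    and mono: "\<And>m n. 1 \<le> m \<Longrightarrow> m \<le> n \<Longrightarrow> \<gamma> n \<le> \<gamma> m"
    and T: "T \<ge> 1"
  shows "(\<Sum>n=1..T. (D n - D (Suc n)) / (2 * \<gamma> n)) \<le> 1 / \<gamma> T - D (Suc T) / (2 * \<gamma> T)"
  using T
proof (induction T rule: nat_induct_at_least)
  case base
  have "D 1 \<le> 2" using D[of 1] by simp
  then show ?case using pos[of 1] by (simp add: field_simps)
next
  case (Suc T)
  have gT: "\<gamma> T > 0" and gT1: "\<gamma> (Suc T) > 0" using pos Suc.hyps by auto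
  have le: "\<gamma> (Suc T) \<le> \<gamma> T" using mono[of T "Suc T"] Suc.hyps by simp
  have DT: "0 \<le> D (Suc T)" "D (Suc T) \<le> 2" using D[of "Suc T"] by auto
  have inv: "1 / \<gamma> T \<le> 1 / \<gamma> (Suc T)" using le gT1 by (simp add: frac_le)
  have "(\<Sum>n=1..Suc T. (D n - D (Suc n)) / (2 * \<gamma> n)) =
      (\<Sum>n=1..T. (D n - D (Suc n)) / (2 * \<gamma> n)) + (D (Suc T) - D (Suc (Suc T))) / (2 * \<gamma> (Suc T))"
    using Suc.hyps by simp
  also have "\<dots> \<le> 1 / \<gamma> T - D (Suc T) / (2 * \<gamma> T) + (D (Suc T) - D (Suc (Suc T))) / (2 * \<gamma> (Suc T))"
    using Suc.IH by simp
  also have "\<dots> = (1 - D (Suc T) / 2) * (1 / \<gamma> T) + D (Suc T) / (2 * \<gamma> (Suc T)) - D (Suc (Suc T)) / (2 * \<gamma> (Suc T))"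
    using gT gT1 by (simp add: field_simps)
  also have "\<dots> \<le> (1 - D (Suc T) / 2) * (1 / \<gamma> (Suc T)) + D (Suc T) / (2 * \<gamma> (Suc T)) - D (Suc (Suc T)) / (2 * \<gamma> (Suc T))"
  proof -
    have "(1 - D (Suc T) / 2) * (1 / \<gamma> T) \<le> (1 - D (Suc T) / 2) * (1 / \<gamma> (Suc T))"
      by (rule mult_left_mono[OF inv]) (use DT in simp)
    then show ?thesis by linarith
  qed
  also have "\<dots> = 1 / \<gamma> (Suc T) - D (Suc (Suc T)) / (2 * \<gamma> (Suc T))"
    using gT1 by (simp add: field_simps)
  finally show ?case .
qed

lemma sum_inv_sqrt: "(\<Sum>n=1..T. 1 / sqrt (real n)) \<le> 2 * sqrt (real T)"
proof (induction T)
  case 0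
  then show ?case by simp
next
  case (Suc T)
  define a where "a = sqrt (real T)"
  define b where "b = sqrt (real (Suc T))"
  have a0: "a \<ge> 0" and b0: "b > 0" by (simp_all add: a_def b_def)
  have ab: "b^2 = a^2 + 1" by (simp add: a_def b_def)
  have "0 \<le> (b - a)^2" by simp
  then have "2 * a * b \<le> 2 * a^2 + 1" using ab by (simp add: power2_eq_square algebra_simps)
  then have "2 * a * b + 1 \<le> 2 * b^2" using ab by simp
  then have "2 * a + 1 / b \<le> 2 * b" using b0 by (simp add: field_simps power2_eq_square)
  moreover have "(\<Sum>n=1..Suc T. 1 / sqrt (real n)) = (\<Sum>n=1..T. 1 / sqrt (real n)) + 1 / b"
    by (simp add: b_def)
  ultimately show ?case using Suc.IH by (simp add: a_def b_def)
qed

lemma cesaro0: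
  fixes \<gamma> :: "nat \<Rightarrow> real"
  assumes lim: "\<gamma> \<longlonglongrightarrow> 0" and pos: "\<And>n. n \<ge> 1 \<Longrightarrow> \<gamma> n > 0"
  shows "(\<lambda>T. (\<Sum>n=1..T. \<gamma> n) / real T) \<longlonglongrightarrow> 0"
proof (rule LIMSEQ_I)
  fix r :: real assume r: "r > 0"
  obtain N where N: "\<And>n. n \<ge> N \<Longrightarrow> norm (\<gamma> n) < r / 2"
    using LIMSEQ_D[OF lim, of "r/2"] r by auto
  define C where "C = (\<Sum>n=1..N. \<gamma> n)"
  have C0: "C \<ge> 0" unfolding C_def by (rule sum_nonneg) (use pos in \<open>auto intro: less_imp_le\<close>)
  obtain M :: nat where M: "M > 2 * C / r" using reals_Archimedean2 by blast
  show "\<exists>no. \<forall>T\<ge>no. norm ((\<Sum>n=1..T. \<gamma> n) / real T - 0) < r"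
  proof (intro exI allI impI)
    fix T assume T: "T \<ge> max (Suc N) M"
    have TN: "T > N" and TM: "real T \<ge> M" using T by auto
    have Tp: "real T > 0" using TN by simp
    have split: "(\<Sum>n=1..T. \<gamma> n) = C + (\<Sum>n=N+1..T. \<gamma> n)"
      unfolding C_def using sum.ub_add_nat[of 1 N \<gamma> "T - N"] TN by simp
    have "(\<Sum>n=N+1..T. \<gamma> n) \<le> (\<Sum>n=N+1..T. r / 2)"
    proof (rule sum_mono)
      fix n assume "n \<in> {N+1..T}"
      then have "N \<le> n" by simp
      then show "\<gamma> n \<le> r / 2" using N[of n] by (simp add: abs_less_iff)
    qed
    also have "\<dots> \<le> real T * (r / 2)" using r by (simp add: mult_right_mono)
    finally have up: "(\<Sum>n=1..T. \<gamma> n) \<le> C + real T * (r / 2)" using split by simp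
    have nn: "0 \<le> (\<Sum>n=1..T. \<gamma> n)" by (rule sum_nonneg) (use pos in \<open>auto intro: less_imp_le\<close>)
    have c1: "C / real T < r / 2"
    proof -
      have "2 * C / r < real T" using M TM by linarith
      then have "2 * C < real T * r" using r by (simp add: field_simps)
      then show ?thesis using Tp by (simp add: field_simps)
    qed
    have c2: "(\<Sum>n=1..T. \<gamma> n) / real T \<le> C / real T + r / 2"
      using up Tp by (simp add: field_simps)
    have c3: "(\<Sum>n=1..T. \<gamma> n) / real T < r" using c1 c2 by linarith
    have "0 \<le> (\<Sum>n=1..T. \<gamma> n) / real T" using nn Tp by simp
    then show "norm ((\<Sum>n=1..T. \<gamma> n) / real T - 0) < r"
      using c3 by simp
  qed
qed



lemma zero_Qset: "P \<ge> 0 \<Longrightarrow> 0 \<in> Qset P"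
  by (simp add: Qset_def block_diag_def blk_zero psd_def hermitian_def vec_eq_iff trace_def)

lemma Qset_surj:
  fixes Q :: "complex^('k::finite \<times> 't::finite)^('k \<times> 't)"
  assumes Pc: "Pc > 0" and Pmax: "Pmax > 0" and Q: "Q \<in> Qset Pmax"
  shows "\<exists>Z\<in>Xset. Qmap Pc Pmax Z = Q"
proof -
  have bd: "block_diag Q" and ps: "\<And>k. psd (blk Q k)" and tr: "(\<Sum>k\<in>UNIV. Re (trace (blk Q k))) \<le> Pmax"
    using Q by (auto simp: Qset_def)
  define q where "q = Re (trace Q)"
  have q: "q = (\<Sum>k\<in>UNIV. Re (trace (blk Q k)))" by (simp add: q_def trace_blocks)
  have q0: "0 \<le> q" unfolding q_def trace_def Re_sum
    by (rule sum_nonneg) (rule psd_diag_nonneg[OF psd_blocks[OF bd ps]])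
  have qP: "q \<le> Pmax" using tr q by simp
  define \<beta> where "\<beta> = (Pc + Pmax) / (Pmax * (Pc + q))"
  have \<beta>0: "\<beta> > 0" using Pc Pmax q0 by (simp add: \<beta>_def)
  define Z where "Z = \<beta> *\<^sub>R Q"
  have trZ: "Re (trace Z) = \<beta> * q" by (simp add: Z_def q_def)
  have bq: "\<beta> * q \<le> 1"
  proof -
    have "(Pc + Pmax) * q \<le> Pmax * (Pc + q)" using qP Pc by (simp add: algebra_simps)
    moreover have den: "Pmax * (Pc + q) > 0" using Pc Pmax q0 by simp
    moreover have "\<beta> * q = (Pc + Pmax) * q / (Pmax * (Pc + q))" by (simp add: \<beta>_def)
    ultimately show ?thesis by (simp add: divide_le_eq)
  qed
  have "Z \<in> Xset"
  proof -
    have "(\<Sum>k\<in>UNIV. Re (trace (blk Z k))) = \<beta> * q"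
      by (simp add: Z_def blk_scaleR q sum_distrib_left)
    then show ?thesis using bd ps \<beta>0 bq
      by (auto simp: Xset_def Z_def blk_scaleR intro!: block_diag_scaleR psd_scaleR)
  qed
  moreover have "Qmap Pc Pmax Z = Q"
  proof -
    have D: "Pc + q > 0" using Pc q0 by simp
    have nz: "Pc * Pmax + Pmax * q \<noteq> 0" using Pmax D
      by (metis distrib_left mult.commute mult_eq_0_iff order_less_irrefl)
    have e1: "Pmax * (\<beta> * q) = (Pc + Pmax) * q / (Pc + q)"
      using Pmax D nz by (simp add: \<beta>_def field_simps)
    have e2: "Pc + Pmax * (1 - \<beta> * q) = (Pc + Pmax) * Pc / (Pc + q)"
    proof -
      have "Pc + Pmax * (1 - \<beta> * q) = (Pc + Pmax) - (Pc + Pmax) * q / (Pc + q)"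
        using e1 by (simp add: algebra_simps)
      also have "\<dots> = (Pc + Pmax) * Pc / (Pc + q)" using D by (simp add: field_simps)
      finally show ?thesis .
    qed
    have e3: "Pc * Pmax * \<beta> = Pc * (Pc + Pmax) / (Pc + q)"
      using Pmax D nz by (simp add: \<beta>_def field_simps)
    have "Pc * Pmax / (Pc + Pmax * (1 - \<beta> * q)) * \<beta> = (Pc * Pmax * \<beta>) / (Pc + Pmax * (1 - \<beta> * q))"
      by simp
    also have "\<dots> = 1" unfolding e2 e3 using Pc Pmax D by simp
    finally have "Pc * Pmax / (Pc + Pmax * (1 - \<beta> * q)) * \<beta> = 1" .
    note c = this
    have "Qmap Pc Pmax Z = (Pc * Pmax / (Pc + Pmax * (1 - \<beta> * q))) *\<^sub>R (\<beta> *\<^sub>R Q)"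
      unfolding Qmap_def trZ by (simp only: Z_def)
    also have "\<dots> = (Pc * Pmax / (Pc + Pmax * (1 - \<beta> * q)) * \<beta>) *\<^sub>R Q" by simp
    also have "\<dots> = Q" unfolding c by simp
    finally show ?thesis .
  qed
  ultimately show ?thesis by blast
qed



lemma norm_add_sq: "(norm (w + c *\<^sub>R v))^2 = (norm w)^2 + 2 * c * inner v w + c^2 * (norm v)^2"
  unfolding power2_norm_eq_inner
  by (simp add: inner_add_left inner_add_right inner_commute power2_eq_square algebra_simps)

theorem theorem1:
  fixes Pc Pmax V0 :: real
    and H :: "nat \<Rightarrow> complex^('k::finite \<times> 't::finite)^('k \<times> 'r::finite)"
    and \<gamma> :: "nat \<Rightarrow> real"
    and X :: "nat \<Rightarrow> complex^('k \<times> 't)^('k \<times> 't)"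
  assumes Pc: "Pc > 0" and Pmax: "Pmax > 0" and V0: "V0 > 0"
    and H_blockdiag: "\<And>n. block_diag (H n)"
    and H_bounded: "\<exists>B. \<forall>n. frob (H n) \<le> B"
    and V_bound: "\<And>n. n \<ge> 1 \<Longrightarrow> frob (grad Pc Pmax (H n) (X n)) \<le> V0"
    and step_pos: "\<And>n. n \<ge> 1 \<Longrightarrow> \<gamma> n > 0"
    and step_noninc: "\<And>m n. 1 \<le> m \<Longrightarrow> m \<le> n \<Longrightarrow> \<gamma> n \<le> \<gamma> m"
    and step_lim: "\<gamma> \<longlonglongrightarrow> 0"
    and step_slow: "filterlim (\<lambda>n. real n * \<gamma> n) at_top sequentially"
    and X1: "X 1 \<in> Xset"
    and X_rec: "\<And>n. n \<ge> 1 \<Longrightarrow>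
                  X (Suc n) = proj (X n + \<gamma> n *\<^sub>R grad Pc Pmax (H n) (X n))"
  shows "limsup (\<lambda>T. ereal (regret Pc Pmax H (\<lambda>n. Qmap Pc Pmax (X n)) T / real T)) \<le> 0
         \<and> (\<forall>T\<ge>1. regret Pc Pmax H (\<lambda>n. Qmap Pc Pmax (X n)) T
                \<le> 1 / \<gamma> T + 1/2 * V0\<^sup>2 * (\<Sum>n = 1..T. \<gamma> n))
         \<and> (\<forall>g>0. (\<forall>n\<ge>1. \<gamma> n = g / sqrt (real n)) \<longrightarrow>
              (\<forall>T\<ge>1. regret Pc Pmax H (\<lambda>n. Qmap Pc Pmax (X n)) T
                 \<le> (1 + g\<^sup>2 * V0\<^sup>2) / g * sqrt (real T)))"
proof -
  define V where "V n = grad Pc Pmax (H n) (X n)" for n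
  define u where "u n W = EE Pc (H n) (Qmap Pc Pmax W)" for n W
  define R where "R T = regret Pc Pmax H (\<lambda>n. Qmap Pc Pmax (X n)) T" for T
  have Xin: "X n \<in> Xset" if "n \<ge> 1" for n
    using that
  proof (induction n rule: nat_induct_at_least)
    case base then show ?case using X1 .
  next
    case (Suc n) then show ?case using X_rec[of n] proj_props[of "X n + \<gamma> n *\<^sub>R grad Pc Pmax (H n) (X n)"] by simp
  qed
  have Vn: "(norm (V n))^2 \<le> V0^2" if "n \<ge> 1" for n
    using V_bound[OF that] unfolding V_def norm_frob[symmetric] by (intro power_mono) auto
  have step: "inner (V n) (Z - X n) \<le> ((norm (X n - Z))^2 - (norm (X (Suc n) - Z))^2) / (2 * \<gamma> n) + \<gamma> n * V0^2 / 2"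
    if n: "n \<ge> 1" and Z: "Z \<in> Xset" for n Z
  proof -
    have g: "\<gamma> n > 0" using step_pos[OF n] .
    have "norm (X (Suc n) - Z) \<le> norm (X n + \<gamma> n *\<^sub>R V n - Z)"
      using proj_props[of "X n + \<gamma> n *\<^sub>R V n"] Z X_rec[OF n] by (simp add: V_def)
    moreover have "X n + \<gamma> n *\<^sub>R V n - Z = (X n - Z) + \<gamma> n *\<^sub>R V n" by (simp add: algebra_simps)
    ultimately have "(norm (X (Suc n) - Z))^2 \<le> (norm ((X n - Z) + \<gamma> n *\<^sub>R V n))^2"
      by (simp add: power_mono)
    also have "\<dots> = (norm (X n - Z))^2 + 2 * \<gamma> n * inner (V n) (X n - Z) + (\<gamma> n)^2 * (norm (V n))^2"
      by (rule norm_add_sq)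
    also have "\<dots> \<le> (norm (X n - Z))^2 + 2 * \<gamma> n * inner (V n) (X n - Z) + (\<gamma> n)^2 * V0^2"
      using Vn[OF n] by (simp add: mult_left_mono)
    finally have "2 * \<gamma> n * inner (V n) (Z - X n) \<le> (norm (X n - Z))^2 - (norm (X (Suc n) - Z))^2 + (\<gamma> n)^2 * V0^2"
      by (simp add: inner_diff_right algebra_simps)
    then show ?thesis using g by (simp add: field_simps power2_eq_square)
  qed
  have conc: "u n Z - u n (X n) \<le> inner (V n) (Z - X n)" if n: "n \<ge> 1" and Z: "Z \<in> Xset" for n Z
    using u_concave[OF Pc Pmax Xset_psd[OF Xin[OF n]] _ _ Xset_psd[OF Z], of "H n"]
      Xset_trace[OF Xin[OF n]] Xset_trace[OF Z]
    by (simp add: u_def V_def)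
  have bound: "R T \<le> 1 / \<gamma> T + 1/2 * V0\<^sup>2 * (\<Sum>n = 1..T. \<gamma> n)" if T: "T \<ge> 1" for T
    unfolding R_def regret_def
  proof (rule cSUP_least)
    show "Qset Pmax \<noteq> {}" using zero_Qset[of Pmax] Pmax by auto
  next
    fix Q :: "complex^('k \<times> 't)^('k \<times> 't)" assume Q: "Q \<in> Qset Pmax"
    obtain Z :: "complex^('k \<times> 't)^('k \<times> 't)" where Z: "Z \<in> Xset" "Qmap Pc Pmax Z = Q" using Qset_surj[OF Pc Pmax Q] by blast
    define D where "D n = (norm (X n - Z))^2" for n
    have "(\<Sum>n = 1..T. EE Pc (H n) Q - EE Pc (H n) (Qmap Pc Pmax (X n))) = (\<Sum>n = 1..T. u n Z - u n (X n))"
      using Z(2) by (simp add: u_def)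
    also have "\<dots> \<le> (\<Sum>n = 1..T. (D n - D (Suc n)) / (2 * \<gamma> n) + \<gamma> n * V0^2 / 2)"
    proof (rule sum_mono)
      fix n assume "n \<in> {1..T}"
      then have n: "n \<ge> 1" by simp
      show "u n Z - u n (X n) \<le> (D n - D (Suc n)) / (2 * \<gamma> n) + \<gamma> n * V0^2 / 2"
        using conc[OF n Z(1)] step[OF n Z(1)] by (simp add: D_def)
    qed
    also have "\<dots> = (\<Sum>n = 1..T. (D n - D (Suc n)) / (2 * \<gamma> n)) + 1/2 * V0\<^sup>2 * (\<Sum>n = 1..T. \<gamma> n)"
      by (simp add: sum.distrib sum_distrib_left sum_divide_distrib mult_ac)
    also have "\<dots> \<le> 1 / \<gamma> T - D (Suc T) / (2 * \<gamma> T) + 1/2 * V0\<^sup>2 * (\<Sum>n = 1..T. \<gamma> n)"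
    proof -
      have "(\<Sum>n = 1..T. (D n - D (Suc n)) / (2 * \<gamma> n)) \<le> 1 / \<gamma> T - D (Suc T) / (2 * \<gamma> T)"
      proof (rule tele[OF _ step_pos step_noninc T])
        fix n :: nat assume "n \<ge> 1"
        then show "0 \<le> D n \<and> D n \<le> 2" using Xset_diam[OF Xin Z(1)] by (simp add: D_def)
      qed
      then show ?thesis by simp
    qed
    also have "\<dots> \<le> 1 / \<gamma> T + 1/2 * V0\<^sup>2 * (\<Sum>n = 1..T. \<gamma> n)"
      using step_pos[OF T] by (simp add: D_def)
    finally show "(\<Sum>n = 1..T. EE Pc (H n) Q - EE Pc (H n) (Qmap Pc Pmax (X n))) \<le> 1 / \<gamma> T + 1/2 * V0\<^sup>2 * (\<Sum>n = 1..T. \<gamma> n)" .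
  qed
  have part3: "\<forall>g>0. (\<forall>n\<ge>1. \<gamma> n = g / sqrt (real n)) \<longrightarrow> (\<forall>T\<ge>1. R T \<le> (1 + g\<^sup>2 * V0\<^sup>2) / g * sqrt (real T))"
  proof (intro allI impI)
    fix g :: real and T :: nat
    assume g: "g > 0" and gam: "\<forall>n\<ge>1. \<gamma> n = g / sqrt (real n)" and T: "T \<ge> 1"
    have s: "(\<Sum>n = 1..T. \<gamma> n) = g * (\<Sum>n = 1..T. 1 / sqrt (real n))"
      unfolding sum_distrib_left by (rule sum.cong) (use gam in auto)
    have s2: "(\<Sum>n = 1..T. \<gamma> n) \<le> g * (2 * sqrt (real T))"
      unfolding s using g sum_inv_sqrt[of T] by (simp add: mult_left_mono)
    have gT: "1 / \<gamma> T = sqrt (real T) / g" using gam T g by simp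
    have "1/2 * V0\<^sup>2 * (\<Sum>n = 1..T. \<gamma> n) \<le> 1/2 * V0\<^sup>2 * (g * (2 * sqrt (real T)))"
      by (rule mult_left_mono[OF s2]) simp
    then have "R T \<le> sqrt (real T) / g + 1/2 * V0\<^sup>2 * (g * (2 * sqrt (real T)))"
      using bound[OF T] unfolding gT by linarith
    also have "\<dots> = (1 + g\<^sup>2 * V0\<^sup>2) / g * sqrt (real T)"
      using g by (simp add: field_simps power2_eq_square)
    finally show "R T \<le> (1 + g\<^sup>2 * V0\<^sup>2) / g * sqrt (real T)" .
  qed
  have part1: "limsup (\<lambda>T. ereal (R T / real T)) \<le> 0"
  proof -
    define b where "b T = inverse (real T * \<gamma> T) + 1/2 * V0\<^sup>2 * ((\<Sum>n = 1..T. \<gamma> n) / real T)" for T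
    have ev: "eventually (\<lambda>T. ereal (R T / real T) \<le> ereal (b T)) sequentially"
      using eventually_ge_at_top[of 1]
    proof eventually_elim
      case (elim T)
      then have Tp: "real T > 0" by simp
      have "R T / real T \<le> (1 / \<gamma> T + 1/2 * V0\<^sup>2 * (\<Sum>n = 1..T. \<gamma> n)) / real T"
        using bound[OF elim] Tp by (simp add: divide_right_mono)
      also have "\<dots> = b T" using Tp by (simp add: b_def field_simps)
      finally show ?case by simp
    qed
    have "b \<longlonglongrightarrow> 0 + 1/2 * V0\<^sup>2 * 0"
      unfolding b_def
      by (intro tendsto_add tendsto_mult tendsto_const tendsto_inverse_0_at_top step_slow cesaro0[OF step_lim step_pos])
    then have lim: "(\<lambda>T. ereal (b T)) \<longlonglongrightarrow> ereal 0" by (simp add: tendsto_ereal)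
    have "limsup (\<lambda>T. ereal (R T / real T)) \<le> limsup (\<lambda>T. ereal (b T))"
      by (rule Limsup_mono[OF ev])
    also have "\<dots> = ereal 0" by (rule lim_imp_Limsup[OF trivial_limit_sequentially lim])
    finally show ?thesis by (simp add: zero_ereal_def)
  qed
  show ?thesis using part1 bound part3 by (simp add: R_def)
qed

end
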